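(* Let a document collection $\mathcal{D}$ be partitioned into $n$ pairwise disjoint shards $D_1,\dots,D_n$, and let $r\ge1$ identical replicas of this partition be stored, each of the $nr$ shard replicas on its own node. Fix a query $q$ with a unique relevant document $d_q$, where $d_q$ is stored in $D_j$ with probability $p(j)$, $\sum_{j=1}^n p(j)=1$. Each node independently fails to respond with probability $f\in[0,1]$, independently of the location of $d_q$. The success probability of a selection of shard replicas is the probability that $d_q$ lies in a shard of which some selected replica responds. The rSmartRed selection assigns to the $i$-th replica of shard $D_j$ ($1\le i\le r$, $1\le j\le n$) the score $f^{i-1}p(j)$ and selects the $tr$ shard replicas with the highest scores (querying shard $D_j$ at as many replicas as the number of its selected pairs $(j,i)$). Then for every integer $tr$ with $1\le tr\le nr$, the rSmartRed selection of $tr$ shard replicas maximizes the success probability among all selections of $tr$ shard replicas.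
   Context: Distributed search model: each node searches only its own shard replica; the query is sent to the selected replicas, and results of nodes that fail to respond are dropped. Here $t$ and $r$ are positive integers and $tr$ is the budget of shard replicas to select. *)

theory Defs
  imports Complex_Main "HOL-Library.FuncSet"
begin

text \<open>Shard replicas (nodes) are pairs (j, i): the i-th replica of shard D_j,
  with 1 \<le> j \<le> n and 1 \<le> i \<le> r.\<close>
definition nodes :: "nat \<Rightarrow> nat \<Rightarrow> (nat \<times> nat) set" where
  "nodes n r = {1..n} \<times> {1..r}"

definition outcome_prob :: "nat \<Rightarrow> nat \<Rightarrow> real \<Rightarrow> (nat \<times> nat \<Rightarrow> bool) \<Rightarrow> real" where
  "outcome_prob n r f w = (\<Prod>x\<in>nodes n r. if w x then 1 - f else f)"

definition success_prob ::
  "nat \<Rightarrow> nat \<Rightarrow> (nat \<Rightarrow> real) \<Rightarrow> real \<Rightarrow> (nat \<times> nat) set \<Rightarrow> real" where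
  "success_prob n r p f S =
     (\<Sum>j\<in>{1..n}. p j *
        (\<Sum>w\<in>PiE (nodes n r) (\<lambda>_. UNIV :: bool set).
           outcome_prob n r f w *
           (if \<exists>x\<in>S. fst x = j \<and> w x then 1 else 0)))"

definition score :: "(nat \<Rightarrow> real) \<Rightarrow> real \<Rightarrow> nat \<times> nat \<Rightarrow> real" where
  "score p f x = f ^ (snd x - 1) * p (fst x)"

definition rSmartRed_selection ::
  "nat \<Rightarrow> nat \<Rightarrow> (nat \<Rightarrow> real) \<Rightarrow> real \<Rightarrow> nat \<Rightarrow> (nat \<times> nat) set \<Rightarrow> bool" where
  "rSmartRed_selection n r p f k S \<longleftrightarrow>
     S \<subseteq> nodes n r \<and> card S = k \<and>
     (\<forall>x\<in>S. \<forall>y\<in>nodes n r - S. score p f y \<le> score p f x)"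

end

theory Submission
  imports Defs
begin

lemma prob_lemma:
  fixes f :: real
  assumes "finite N" "B \<subseteq> N"
  shows "(\<Sum>w\<in>PiE N (\<lambda>_. UNIV :: bool set). (\<Prod>x\<in>N. if w x then 1 - f else f) *
           (\<Prod>x\<in>N. if x \<in> B \<and> w x then 0 else 1)) = f ^ card B"
proof -
  have "(\<Sum>w\<in>PiE N (\<lambda>_. UNIV :: bool set). (\<Prod>x\<in>N. if w x then 1 - f else f) *
           (\<Prod>x\<in>N. if x \<in> B \<and> w x then 0 else 1))
      = (\<Sum>w\<in>PiE N (\<lambda>_. UNIV :: bool set). \<Prod>x\<in>N. (if w x then 1 - f else f) *
           (if x \<in> B \<and> w x then 0 else 1))"
    by (simp add: prod.distrib)
  also have "\<dots> = (\<Prod>x\<in>N. \<Sum>y\<in>(UNIV::bool set). (if y then 1 - f else f) *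
           (if x \<in> B \<and> y then 0 else 1))"
    by (rule prod_sum_PiE[symmetric]) (use assms in auto)
  also have "\<dots> = (\<Prod>x\<in>N. if x \<in> B then f else 1)"
    by (rule prod.cong) (auto simp: UNIV_bool)
  also have "\<dots> = (\<Prod>x\<in>N \<inter> B. f)"
    by (rule prod.inter_restrict[OF assms(1), symmetric])
  also have "\<dots> = f ^ card B"
    using assms by (simp add: Int_absorb1)
  finally show ?thesis .
qed

lemma succ_formula:
  assumes "X \<subseteq> nodes n r"
  shows "success_prob n r p f X = (\<Sum>j\<in>{1..n}. p j * (1 - f ^ card {i. (j, i) \<in> X}))"
  unfolding success_prob_def
proof (rule sum.cong[OF refl])
  fix j assume j: "j \<in> {1..n}"
  define N where "N = nodes n r"
  define B where "B = X \<inter> {x. fst x = j}"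
  have fN: "finite N" by (simp add: N_def nodes_def)
  have BN: "B \<subseteq> N" using assms by (auto simp: B_def N_def)
  have ind: "(if \<exists>x\<in>X. fst x = j \<and> w x then 1 else 0) = 1 - (\<Prod>x\<in>N. if x \<in> B \<and> w x then 0 else (1::real))"
    for w
  proof (cases "\<exists>x\<in>X. fst x = j \<and> w x")
    case True
    then obtain x where "x \<in> X" "fst x = j" "w x" by blast
    then have "(\<Prod>x\<in>N. if x \<in> B \<and> w x then 0 else (1::real)) = 0"
      using fN BN by (subst prod_zero_iff) (auto simp: B_def intro!: bexI[of _ x])
    then show ?thesis using True by simp
  next
    case False
    then have "(\<Prod>x\<in>N. if x \<in> B \<and> w x then 0 else (1::real)) = 1"
      by (intro prod.neutral) (auto simp: B_def)
    then show ?thesis using False by simp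
  qed
  have "(\<Sum>w\<in>PiE N (\<lambda>_. UNIV :: bool set). outcome_prob n r f w *
           (if \<exists>x\<in>X. fst x = j \<and> w x then 1 else 0))
     = (\<Sum>w\<in>PiE N (\<lambda>_. UNIV :: bool set). (\<Prod>x\<in>N. if w x then 1 - f else f) *
           (\<Prod>x\<in>N. if x \<in> {} \<and> w x then 0 else 1))
       - (\<Sum>w\<in>PiE N (\<lambda>_. UNIV :: bool set). (\<Prod>x\<in>N. if w x then 1 - f else f) *
           (\<Prod>x\<in>N. if x \<in> B \<and> w x then 0 else 1))"
    by (simp add: ind outcome_prob_def N_def algebra_simps sum_subtractf)
  also have "\<dots> = 1 - f ^ card B"
    using prob_lemma[OF fN BN, of f] prob_lemma[OF fN, of "{}" f] by simp
  also have "card B = card {i. (j, i) \<in> X}"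
  proof -
    have "B = Pair j ` {i. (j, i) \<in> X}" by (auto simp: B_def)
    then show ?thesis by (simp add: card_image inj_on_def)
  qed
  finally show "p j * (\<Sum>w\<in>PiE (nodes n r) (\<lambda>_. UNIV :: bool set). outcome_prob n r f w *
           (if \<exists>x\<in>X. fst x = j \<and> w x then 1 else 0)) = p j * (1 - f ^ card {i. (j, i) \<in> X})"
    by (simp add: N_def)
qed

lemma topk:
  fixes g :: "'a \<Rightarrow> real"
  assumes "finite U" "A \<subseteq> U" "B \<subseteq> U" "card A = card B"
    and "\<And>x y. x \<in> A \<Longrightarrow> y \<in> U - A \<Longrightarrow> g y \<le> g x"
  shows "sum g B \<le> sum g A"
proof -
  have fA: "finite A" by (rule finite_subset[OF assms(2) assms(1)])
  have fB: "finite B" by (rule finite_subset[OF assms(3) assms(1)])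
  have c1: "card (A - B) = card A - card (A \<inter> B)"
    using fA by (simp add: card_Diff_subset_Int)
  have c2: "card (B - A) = card B - card (B \<inter> A)"
    using fB by (simp add: card_Diff_subset_Int)
  have cd: "card (B - A) = card (A - B)"
    using c1 c2 assms(4) by (simp only: Int_commute[of B A])
  have sA: "sum g A = sum g (A \<inter> B) + sum g (A - B)"
    by (rule sum.Int_Diff[OF fA])
  have sB: "sum g B = sum g (A \<inter> B) + sum g (B - A)"
    using sum.Int_Diff[OF fB, of g A] by (simp only: Int_commute[of B A])
  show ?thesis
  proof (cases "A - B = {}")
    case True
    have "card (B - A) = 0" by (simp only: cd True card.empty)
    then have BA: "B - A = {}" using card_0_eq[OF finite_Diff[OF fB]] by blast
    show ?thesis by (simp only: sA sB True BA sum.empty order_refl)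
  next
    case False
    define m where "m = Min (g ` (A - B))"
    have fin: "finite (g ` (A - B))" using fA by simp
    have "sum g (B - A) \<le> of_nat (card (B - A)) * m"
    proof -
      have "sum g (B - A) \<le> (\<Sum>y\<in>B - A. m)"
      proof (rule sum_mono)
        fix y assume "y \<in> B - A"
        then have "y \<in> U - A" using assms(3) by blast
        then have "\<forall>x\<in>A - B. g y \<le> g x" using assms(5) by blast
        then have "\<forall>z\<in>g ` (A - B). g y \<le> z" by blast
        moreover have ne: "g ` (A - B) \<noteq> {}" using False by blast
        ultimately show "g y \<le> m" unfolding m_def using Min_ge_iff[OF fin ne] by blast
      qed
      then show ?thesis by simp
    qed
    also have "\<dots> = of_nat (card (A - B)) * m" using cd by simp
    also have "\<dots> = (\<Sum>x\<in>A - B. m)" by simp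
    also have "\<dots> \<le> sum g (A - B)"
    proof (rule sum_mono)
      fix x assume "x \<in> A - B"
      then show "m \<le> g x" unfolding m_def by (intro Min_le[OF fin]) simp
    qed
    finally show ?thesis using sA sB by linarith
  qed
qed

lemma geo: "1 - (f::real) ^ c = (1 - f) * (\<Sum>i\<in>{1..c}. f ^ (i - 1))"
  by (induction c) (auto simp: algebra_simps)

lemma first_best:
  fixes f :: real
  assumes "0 \<le> f" "f \<le> 1" "B \<subseteq> {1..r}"
  shows "(\<Sum>i\<in>B. f ^ (i - 1)) \<le> (\<Sum>i\<in>{1..card B}. f ^ (i - 1))"
proof (rule topk[of "{1..r}"])
  have "card B \<le> r" using card_mono[OF _ assms(3)] by simp
  then show "{1..card B} \<subseteq> {1..r}" by auto
  show "\<And>x y. x \<in> {1..card B} \<Longrightarrow> y \<in> {1..r} - {1..card B} \<Longrightarrow> f ^ (y - 1) \<le> f ^ (x - 1)"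
    using assms by (auto intro!: power_decreasing)
qed (use assms in auto)


theorem theorem1:
  fixes n r t :: nat and p :: "nat \<Rightarrow> real" and f :: real
    and S T :: "(nat \<times> nat) set"
  assumes "r \<ge> 1" and "t \<ge> 1"
    and "\<And>j. j \<in> {1..n} \<Longrightarrow> p j \<ge> 0"
    and "(\<Sum>j\<in>{1..n}. p j) = 1"
    and "0 \<le> f" and "f \<le> 1"
    and "1 \<le> t * r" and "t * r \<le> n * r"
    and "rSmartRed_selection n r p f (t * r) S"
    and "T \<subseteq> nodes n r" and "card T = t * r"
  shows "success_prob n r p f T \<le> success_prob n r p f S"
proof -
  have Sn: "S \<subseteq> nodes n r" and cS: "card S = t * r"
    and gr: "\<And>x y. x \<in> S \<Longrightarrow> y \<in> nodes n r - S \<Longrightarrow> score p f y \<le> score p f x"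
    using assms(9) unfolding rSmartRed_selection_def by auto
  have fN: "finite (nodes n r)" by (simp add: nodes_def)
  have Tn: "T \<subseteq> nodes n r" by fact
  define cT where "cT j = card {i. (j, i) \<in> T}" for j
  define Tj where "Tj j = {i. (j, i) \<in> T}" for j
  define Sj where "Sj j = {i. (j, i) \<in> S}" for j
  have Tj_sub: "Tj j \<subseteq> {1..r}" for j using Tn by (auto simp: Tj_def nodes_def)
  have Sj_sub: "Sj j \<subseteq> {1..r}" for j using Sn by (auto simp: Sj_def nodes_def)
  have cTr: "cT j \<le> r" for j
    using card_mono[OF _ Tj_sub[of j]] by (simp add: cT_def Tj_def)
  define T' where "T' = Sigma {1..n} (\<lambda>j. {1..cT j})"
  have cTs: "{1..cT j} \<subseteq> {1..r}" for j using cTr[of j] by auto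
  have T'n: "T' \<subseteq> nodes n r" unfolding T'_def nodes_def using cTs by blast
  have Tsig: "T = Sigma {1..n} Tj" using Tn by (auto simp: Tj_def nodes_def)
  have Ssig: "S = Sigma {1..n} Sj" using Sn by (auto simp: Sj_def nodes_def)
  have cT': "card T' = card T"
  proof -
    have "card T' = (\<Sum>j\<in>{1..n}. cT j)" by (simp add: T'_def)
    also have "\<dots> = (\<Sum>j\<in>{1..n}. card (Tj j))" by (simp add: cT_def Tj_def)
    also have "\<dots> = card T"
      by (subst Tsig) (use finite_subset[OF Tj_sub] in auto)
    finally show ?thesis .
  qed
  have sumT0: "(\<Sum>x\<in>T'. score p f x) = (\<Sum>j\<in>{1..n}. \<Sum>i\<in>{1..cT j}. score p f (j, i))"
    unfolding T'_def by (subst sum.Sigma) auto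
  have sumT': "(\<Sum>x\<in>T'. score p f x) = (\<Sum>j\<in>{1..n}. p j * (\<Sum>i\<in>{1..cT j}. f ^ (i - 1)))"
    unfolding sumT0 by (simp add: score_def sum_distrib_left mult.commute)
  have finSj: "finite (Sj j)" for j using finite_subset[OF Sj_sub[of j]] by simp
  have sumS0: "(\<Sum>x\<in>S. score p f x) = (\<Sum>j\<in>{1..n}. \<Sum>i\<in>Sj j. score p f (j, i))"
    by (subst Ssig, subst sum.Sigma) (auto simp: finSj)
  have sumS: "(\<Sum>x\<in>S. score p f x) = (\<Sum>j\<in>{1..n}. p j * (\<Sum>i\<in>Sj j. f ^ (i - 1)))"
    unfolding sumS0 by (simp add: score_def sum_distrib_left mult.commute)
  have "success_prob n r p f T = (\<Sum>j\<in>{1..n}. p j * (1 - f ^ cT j))"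
    using succ_formula[OF Tn] by (simp add: cT_def)
  also have "\<dots> = (1 - f) * (\<Sum>x\<in>T'. score p f x)"
    by (simp add: sumT' geo sum_distrib_left algebra_simps)
  also have "\<dots> \<le> (1 - f) * (\<Sum>x\<in>S. score p f x)"
    using topk[OF fN Sn T'n, of "score p f"] cS cT' assms(11) gr assms(6)
    by (intro mult_left_mono) auto
  also have "\<dots> = (\<Sum>j\<in>{1..n}. p j * ((1 - f) * (\<Sum>i\<in>Sj j. f ^ (i - 1))))"
    by (simp add: sumS sum_distrib_left algebra_simps)
  also have "\<dots> \<le> (\<Sum>j\<in>{1..n}. p j * ((1 - f) * (\<Sum>i\<in>{1..card (Sj j)}. f ^ (i - 1))))"
  proof (rule sum_mono)
    fix j assume j: "j \<in> {1..n}"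
    show "p j * ((1 - f) * (\<Sum>i\<in>Sj j. f ^ (i - 1))) \<le> p j * ((1 - f) * (\<Sum>i\<in>{1..card (Sj j)}. f ^ (i - 1)))"
      using first_best[OF assms(5,6) Sj_sub[of j]] assms(3)[OF j] assms(6)
      by (intro mult_left_mono) auto
  qed
  also have "\<dots> = success_prob n r p f S"
    using succ_formula[OF Sn] by (simp add: Sj_def geo)
  finally show ?thesis .
qed

end
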